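(* Let $p$ be an odd prime, $R=F_p+vF_p$ with $v^2=v$, $\theta=\lambda+v\mu$ ($\lambda,\mu\in F_p$) a unit of $R$, and let $C=vC_{1-v}\oplus(1-v)C_v$ be a $\theta$-constacyclic code of length $n$ over $R$. Suppose $C=\langle vh_1(x),(1-v)h_2(x)\rangle$ in $R[x]/\langle x^n-\theta\rangle$, where $h_1(x),h_2(x)\in F_p[x]$ are monic with $h_1(x)\mid x^n-(\lambda+\mu)$ and $h_2(x)\mid x^n-\lambda$. Then $C_{1-v}=[h_1(x)]$ and $C_v=[h_2(x)]$; that is, $h_1(x)$ and $h_2(x)$ are the generator polynomials of the constacyclic codes $C_{1-v}$ and $C_v$, respectively.
   Context: A $\theta$-constacyclic code of length $n$ over $R$ is an $R$-submodule of $R^n$ closed under $(c_0,\dots,c_{n-1})\mapsto(\theta c_{n-1},c_0,\dots,c_{n-2})$, identified with an ideal of $R[x]/\langle x^n-\theta\rangle$ via $(c_i)\mapsto\sum c_ix^i$; $\langle\cdot\rangle$ denotes the generated ideal. $C_v=\{b\in F_p^n : va+(1-v)b\in C\text{ for some }a\in F_p^n\}$, $C_{1-v}=\{a\in F_p^n : va+(1-v)b\in C\text{ for some }b\in F_p^n\}$. For a monic divisor $g(x)$ of $x^n-\alpha$ ($\alpha\in F_p^*$), $[g(x)]$ denotes the ideal of $F_p[x]/\langle x^n-\alpha\rangle$ generated by $g(x)$; the generator polynomial of an $\alpha$-constacyclic code over $F_p$ is the unique monic divisor $g$ of $x^n-\alpha$ with the code equal to $[g(x)]$. *)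

theory Defs
  imports "HOL-Computational_Algebra.Polynomial" "HOL-Computational_Algebra.Primes" "HOL-Library.Cardinality"
begin

text \<open>VR a b represents the element a + v b.\<close>
datatype 'a vring = VR (vr0: 'a) (vr1: 'a)

instantiation vring :: (comm_ring_1) comm_ring_1
begin
definition "0 = VR 0 0"
definition "1 = VR 1 0"
definition "x + y = VR (vr0 x + vr0 y) (vr1 x + vr1 y)"
definition "x - y = VR (vr0 x - vr0 y) (vr1 x - vr1 y)"
definition "- x = VR (- vr0 x) (- vr1 x)"
definition "x * y = VR (vr0 x * vr0 y) (vr0 x * vr1 y + vr1 x * vr0 y + vr1 x * vr1 y)"
instance
  by standard (auto simp: zero_vring_def one_vring_def plus_vring_def minus_vring_def
      uminus_vring_def times_vring_def algebra_simps intro: vring.expand)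
end

definition vv :: "'a::comm_ring_1 vring" where "vv = VR 0 1"
definition emb :: "'a::comm_ring_1 \<Rightarrow> 'a vring" where "emb a = VR a 0"

definition lift :: "'a::comm_ring_1 poly \<Rightarrow> 'a vring poly" where
  "lift f = map_poly emb f"

definition cshift :: "nat \<Rightarrow> 'b::comm_ring_1 \<Rightarrow> 'b poly \<Rightarrow> 'b poly" where
  "cshift n th c = monom (th * coeff c (n - 1)) 0 + (\<Sum>i<n - 1. monom (coeff c i) (Suc i))"

text \<open>A th-constacyclic code of length n over the ring 'b: a submodule of 'b^n
  (words = polynomials of degree < n) closed under the constacyclic shift.\<close>
definition constacyclic_code :: "nat \<Rightarrow> 'b::comm_ring_1 \<Rightarrow> 'b poly set \<Rightarrow> bool" where
  "constacyclic_code n th C \<longleftrightarrow>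
     C \<subseteq> {c. degree c < n} \<and> 0 \<in> C \<and>
     (\<forall>c\<in>C. \<forall>d\<in>C. c + d \<in> C) \<and>
     (\<forall>r. \<forall>c\<in>C. smult r c \<in> C) \<and>
     (\<forall>c\<in>C. cshift n th c \<in> C)"

text \<open>The ideal generated by g1, g2 in 'b[x]/<x^n - th>, represented by the
  residues of degree < n.\<close>
definition ideal2 :: "nat \<Rightarrow> 'b::comm_ring_1 \<Rightarrow> 'b poly \<Rightarrow> 'b poly \<Rightarrow> 'b poly set" where
  "ideal2 n th g1 g2 = {c. degree c < n \<and>
     (\<exists>f g q. c = f * g1 + g * g2 + q * (monom 1 n - [:th:]))}"

definition gen_ideal :: "nat \<Rightarrow> 'a::comm_ring_1 \<Rightarrow> 'a poly \<Rightarrow> 'a poly set" where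
  "gen_ideal n alpha g = {c. degree c < n \<and>
     (\<exists>f q. c = f * g + q * (monom 1 n - [:alpha:]))}"

definition C_v :: "nat \<Rightarrow> 'a::comm_ring_1 vring poly set \<Rightarrow> 'a poly set" where
  "C_v n C = {b. degree b < n \<and> (\<exists>a. degree a < n \<and>
      smult vv (lift a) + smult (1 - vv) (lift b) \<in> C)}"

definition C_1v :: "nat \<Rightarrow> 'a::comm_ring_1 vring poly set \<Rightarrow> 'a poly set" where
  "C_1v n C = {a. degree a < n \<and> (\<exists>b. degree b < n \<and>
      smult vv (lift a) + smult (1 - vv) (lift b) \<in> C)}"

end

theory Submission
  imports Defs
begin

lemma sum_hom_aux:
  fixes f :: "'a::comm_ring_1 \<Rightarrow> 'b::comm_ring_1"
  assumes "f 0 = 0" "\<And>x y. f (x+y) = f x + f y"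
  shows "f (\<Sum>i\<le>(n::nat). g i) = (\<Sum>i\<le>n. f (g i))"
  by (induct n) (simp_all add: assms)

lemma map_poly_hom_mult:
  fixes f :: "'a::comm_ring_1 \<Rightarrow> 'b::comm_ring_1"
  assumes "f 0 = 0" "\<And>x y. f (x+y) = f x + f y" "\<And>x y. f (x*y) = f x * f y"
  shows "map_poly f (p*q) = map_poly f p * map_poly f q"
  by (rule poly_eqI) (simp add: coeff_map_poly coeff_mult assms sum_hom_aux)

lemma map_poly_hom_add:
  fixes f :: "'a::comm_ring_1 \<Rightarrow> 'b::comm_ring_1"
  assumes "f 0 = 0" "\<And>x y. f (x+y) = f x + f y"
  shows "map_poly f (p+q) = map_poly f p + map_poly f q"
  by (rule poly_eqI) (simp add: coeff_map_poly assms)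

lemma map_poly_hom_diff:
  fixes f :: "'a::comm_ring_1 \<Rightarrow> 'b::comm_ring_1"
  assumes "f 0 = 0" "\<And>x y. f (x-y) = f x - f y"
  shows "map_poly f (p-q) = map_poly f p - map_poly f q"
  by (rule poly_eqI) (simp add: coeff_map_poly assms)

definition P1 :: "'a::comm_ring_1 vring \<Rightarrow> 'a" where "P1 x = vr0 x + vr1 x"

lemma P1_hom: "P1 0 = 0" "P1 (x+y) = P1 x + P1 y" "P1 (x-y) = P1 x - P1 y" "P1 (x*y) = P1 x * P1 y"
  by (simp_all add: P1_def zero_vring_def plus_vring_def minus_vring_def times_vring_def algebra_simps)

lemma P0_hom: "vr0 (0::'a::comm_ring_1 vring) = 0" "vr0 (x+y) = vr0 x + vr0 y" "vr0 (x-y) = vr0 x - vr0 y" "vr0 (x*y) = vr0 x * vr0 y"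
  by (simp_all add: zero_vring_def plus_vring_def minus_vring_def times_vring_def algebra_simps)

lemma emb_hom: "emb 0 = (0::'a::comm_ring_1 vring)" "emb (x+y) = emb x + emb y" "emb (x-y) = emb x - emb y" "emb (x*y) = emb x * emb y"
  by (simp_all add: emb_def zero_vring_def plus_vring_def minus_vring_def times_vring_def algebra_simps)

lemma M1_elem: "map_poly P1 (smult vv (lift a) + smult (1 - vv) (lift b)) = (a::'a::comm_ring_1 poly)"
  by (rule poly_eqI) (simp add: coeff_map_poly lift_def P1_def emb_def vv_def zero_vring_def one_vring_def
      plus_vring_def minus_vring_def times_vring_def)

lemma M0_elem: "map_poly vr0 (smult vv (lift a) + smult (1 - vv) (lift b)) = (b::'a::comm_ring_1 poly)"
  by (rule poly_eqI) (simp add: coeff_map_poly lift_def emb_def vv_def zero_vring_def one_vring_def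
      plus_vring_def minus_vring_def times_vring_def)

lemma M1_smult: "map_poly P1 (smult c p) = smult (P1 c) (map_poly P1 p)"
  by (rule map_poly_smult) (simp_all add: P1_hom)

lemma M0_smult: "map_poly vr0 (smult c p) = smult (vr0 c) (map_poly vr0 (p::'a::comm_ring_1 vring poly))"
  by (rule map_poly_smult) (simp_all add: P0_hom)

lemma M1_lift: "map_poly P1 (lift a) = (a::'a::comm_ring_1 poly)"
  by (rule poly_eqI) (simp add: coeff_map_poly lift_def P1_def emb_def zero_vring_def)

lemma M0_lift: "map_poly vr0 (lift a) = (a::'a::comm_ring_1 poly)"
  by (rule poly_eqI) (simp add: coeff_map_poly lift_def emb_def zero_vring_def)

lemma lift_mult: "lift (p*q) = lift p * lift (q::'a::comm_ring_1 poly)"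
  unfolding lift_def by (rule map_poly_hom_mult) (simp_all add: emb_hom)
lemma lift_add: "lift (p+q) = lift p + lift (q::'a::comm_ring_1 poly)"
  unfolding lift_def by (rule map_poly_hom_add) (simp_all add: emb_hom)
lemma lift_diff: "lift (p-q) = lift p - lift (q::'a::comm_ring_1 poly)"
  unfolding lift_def by (rule map_poly_hom_diff) (simp_all add: emb_hom)
lemma lift_monom: "lift (monom 1 n) = (monom 1 n :: 'a::comm_ring_1 vring poly)"
  unfolding lift_def by (simp add: map_poly_monom emb_hom) (simp add: emb_def one_vring_def)
lemma lift_const: "lift [:c:] = [:emb (c::'a::comm_ring_1):]"
  unfolding lift_def by (simp add: map_poly_pCons emb_hom)
lemma lift_deg: "degree (lift a) \<le> degree (a::'a::comm_ring_1 poly)"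
  unfolding lift_def by (rule map_poly_degree_leq)

lemma M1_ideal:
  "map_poly P1 (f * smult vv (lift h1) + g * smult (1 - vv) (lift h2) + q * (monom 1 n - [:VR lam mu:]))
   = map_poly P1 f * h1 + map_poly P1 q * (monom 1 n - [:lam + mu:])"
proof -
  have e: "P1 (vv::'a vring) = 1" "P1 (1 - (vv::'a vring)) = 0" "P1 (VR lam mu) = lam + mu" "P1 (1::'a vring) = 1"
    by (simp_all add: P1_def vv_def one_vring_def minus_vring_def)
  have m: "map_poly P1 (monom 1 n - [:VR lam mu:]) = monom 1 n - [:lam + mu:]"
    by (simp add: map_poly_hom_diff P1_hom map_poly_monom map_poly_pCons e)
  show ?thesis
    by (simp add: map_poly_hom_add map_poly_hom_mult P1_hom M1_smult M1_lift e m)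
qed

lemma M0_ideal:
  "map_poly vr0 (f * smult vv (lift h1) + g * smult (1 - vv) (lift h2) + q * (monom 1 n - [:VR lam mu:]))
   = map_poly vr0 g * h2 + map_poly vr0 q * (monom 1 n - [:lam:])"
proof -
  have e: "vr0 (vv::'a vring) = 0" "vr0 (1 - (vv::'a vring)) = 1" "vr0 (1::'a vring) = 1"
    by (simp_all add: vv_def one_vring_def minus_vring_def)
  have m: "map_poly vr0 (monom 1 n - [:VR lam mu:]) = monom 1 n - [:lam:]"
    by (simp add: map_poly_hom_diff P0_hom map_poly_monom map_poly_pCons e)
  show ?thesis
    by (simp add: map_poly_hom_add map_poly_hom_mult P0_hom M0_smult M0_lift e m)
qed

theorem theorem3p5:
  fixes p n :: nat and lam mu :: "'a::{finite,field}" and th :: "'a vring"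
    and C :: "'a vring poly set" and h1 h2 :: "'a poly"
  assumes "prime p" and "odd p" and "CARD('a) = p"
    and "n > 0"
    and "th = emb lam + vv * emb mu" and "th dvd 1"
    and "constacyclic_code n th C"
    and "C = {smult vv (lift a) + smult (1 - vv) (lift b) | a b. a \<in> C_1v n C \<and> b \<in> C_v n C}"
    and "C = ideal2 n th (smult vv (lift h1)) (smult (1 - vv) (lift h2))"
    and "lead_coeff h1 = 1" and "h1 dvd (monom 1 n - [:lam + mu:])"
    and "lead_coeff h2 = 1" and "h2 dvd (monom 1 n - [:lam:])"
  shows "C_1v n C = gen_ideal n (lam + mu) h1 \<and> C_v n C = gen_ideal n lam h2"
proof -
  have th: "th = VR lam mu"
    using assms(5) by (simp add: emb_def vv_def times_vring_def plus_vring_def)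
  have vth: "vv * th = vv * emb (lam + mu)"
    by (simp add: th vv_def emb_def times_vring_def)
  have uth: "(1 - vv) * th = (1 - vv) * emb lam"
    by (simp add: th vv_def emb_def times_vring_def one_vring_def minus_vring_def)
  have C: "C = ideal2 n th (smult vv (lift h1)) (smult (1 - vv) (lift h2))" by (fact assms(9))
  have A: "C_1v n C = gen_ideal n (lam + mu) h1"
  proof (intro set_eqI iffI)
    fix a assume "a \<in> C_1v n C"
    then obtain b where a: "degree a < n" and "smult vv (lift a) + smult (1 - vv) (lift b) \<in> C"
      unfolding C_1v_def by auto
    then obtain f g q where "smult vv (lift a) + smult (1 - vv) (lift b)
       = f * smult vv (lift h1) + g * smult (1 - vv) (lift h2) + q * (monom 1 n - [:th:])"
      unfolding C ideal2_def by auto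
    from arg_cong[where f="map_poly P1", OF this]
    have "a = map_poly P1 f * h1 + map_poly P1 q * (monom 1 n - [:lam + mu:])"
      by (simp only: M1_elem M1_ideal th)
    then show "a \<in> gen_ideal n (lam + mu) h1" using a unfolding gen_ideal_def by blast
  next
    fix a assume "a \<in> gen_ideal n (lam + mu) h1"
    then obtain f q where a: "degree a < n" and aeq: "a = f * h1 + q * (monom 1 n - [:lam + mu:])"
      unfolding gen_ideal_def by auto
    have d: "degree (smult vv (lift a)) < n"
      using a lift_deg[of a] degree_smult_le[of vv "lift a"] by linarith
    have "smult vv (lift a) = lift f * smult vv (lift h1) + 0 * smult (1 - vv) (lift h2)
        + smult vv (lift q) * (monom 1 n - [:th:])"
    proof -
      have "smult vv (monom 1 n - [:th:]) = smult vv (monom 1 n - [:emb (lam+mu):])"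
        by (simp add: smult_diff_right vth)
      then show ?thesis
        by (simp add: aeq lift_add lift_mult lift_diff lift_monom lift_const smult_add_right
            mult_smult_right) (metis mult_smult_right)
    qed
    then have "smult vv (lift a) \<in> C" using d unfolding C ideal2_def by blast
    then have "smult vv (lift a) + smult (1 - vv) (lift 0) \<in> C" by (simp add: lift_def)
    then show "a \<in> C_1v n C" using a assms(4) unfolding C_1v_def by (auto intro!: exI[of _ 0])
  qed
  have B: "C_v n C = gen_ideal n lam h2"
  proof (intro set_eqI iffI)
    fix b assume "b \<in> C_v n C"
    then obtain a where b: "degree b < n" and "smult vv (lift a) + smult (1 - vv) (lift b) \<in> C"
      unfolding C_v_def by auto
    then obtain f g q where "smult vv (lift a) + smult (1 - vv) (lift b)
       = f * smult vv (lift h1) + g * smult (1 - vv) (lift h2) + q * (monom 1 n - [:th:])"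
      unfolding C ideal2_def by auto
    from arg_cong[where f="map_poly vr0", OF this]
    have "b = map_poly vr0 g * h2 + map_poly vr0 q * (monom 1 n - [:lam:])"
      by (simp only: M0_elem M0_ideal th)
    then show "b \<in> gen_ideal n lam h2" using b unfolding gen_ideal_def by blast
  next
    fix b assume "b \<in> gen_ideal n lam h2"
    then obtain f q where b: "degree b < n" and beq: "b = f * h2 + q * (monom 1 n - [:lam:])"
      unfolding gen_ideal_def by auto
    have d: "degree (smult (1 - vv) (lift b)) < n"
      using b lift_deg[of b] degree_smult_le[of "1 - vv" "lift b"] by linarith
    have "smult (1 - vv) (lift b) = 0 * smult vv (lift h1) + lift f * smult (1 - vv) (lift h2)
        + smult (1 - vv) (lift q) * (monom 1 n - [:th:])"
    proof -
      have "smult (1 - vv) (monom 1 n - [:th:]) = smult (1 - vv) (monom 1 n - [:emb lam:])"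
        by (simp add: smult_diff_right uth)
      then show ?thesis
        by (simp add: beq lift_add lift_mult lift_diff lift_monom lift_const smult_add_right
            mult_smult_right) (metis mult_smult_right)
    qed
    then have "smult (1 - vv) (lift b) \<in> C" using d unfolding C ideal2_def by blast
    then have "smult vv (lift 0) + smult (1 - vv) (lift b) \<in> C" by (simp add: lift_def)
    then show "b \<in> C_v n C" using b assms(4) unfolding C_v_def by (auto intro!: exI[of _ 0])
  qed
  show ?thesis using A B by blast
qed

end
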